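(* Let $S$ be a group and $A,B$ left $S$-acts such that there exist injective homomorphisms $A\rightarrowtail B^I$ and $B\rightarrowtail A^J$ for some sets $I,J$. Then $C\amalg A$ and $C\amalg B$ are geometrically equivalent for every left $S$-act $C$.
   Context: A left $S$-act is a nonempty set with an action $S\times A\to A$ satisfying $1a=a$, $(st)a=s(ta)$; homomorphisms preserve the action; $\amalg$ denotes coproduct (disjoint union) and $B^I$ is the cartesian power with componentwise action. For a nonempty finite set $X$, $F_X=\coprod_{x\in X}S_x$ is the free $S$-act on $X$. For an $S$-act $G$ and a relation $T\subseteq F_X\times F_X$, $T'_G=\{\mu:F_X\to G \text{ homomorphism}: T\subseteq\ker\mu\}$ and $T''_G=\bigcap_{\mu\in T'_G}\ker\mu$ (empty intersection $=F_X\times F_X$). $S$-acts $G_1,G_2$ are geometrically equivalent iff $T''_{G_1}=T''_{G_2}$ for all nonempty finite $X$ and all $T\subseteq F_X\times F_X$. *)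

theory Defs
  imports "HOL-Algebra.Group" "HOL-Library.FuncSet"
begin

type_synonym ('s, 'a) sact = "'a set \<times> ('s \<Rightarrow> 'a \<Rightarrow> 'a)"

definition car :: "('s, 'a) sact \<Rightarrow> 'a set" where "car A = fst A"
definition act :: "('s, 'a) sact \<Rightarrow> 's \<Rightarrow> 'a \<Rightarrow> 'a" where "act A = snd A"

definition is_act :: "('s, 'm) monoid_scheme \<Rightarrow> ('s, 'a) sact \<Rightarrow> bool" where
  "is_act S A \<longleftrightarrow> car A \<noteq> {}
     \<and> (\<forall>s\<in>carrier S. \<forall>a\<in>car A. act A s a \<in> car A)
     \<and> (\<forall>a\<in>car A. act A \<one>\<^bsub>S\<^esub> a = a)
     \<and> (\<forall>s\<in>carrier S. \<forall>t\<in>carrier S. \<forall>a\<in>car A.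
          act A (s \<otimes>\<^bsub>S\<^esub> t) a = act A s (act A t a))"

definition act_hom :: "('s, 'm) monoid_scheme \<Rightarrow> ('s, 'a) sact \<Rightarrow> ('s, 'b) sact \<Rightarrow> ('a \<Rightarrow> 'b) \<Rightarrow> bool" where
  "act_hom S A B f \<longleftrightarrow> (\<forall>a\<in>car A. f a \<in> car B)
     \<and> (\<forall>s\<in>carrier S. \<forall>a\<in>car A. f (act A s a) = act B s (f a))"

definition coprod :: "('s, 'a) sact \<Rightarrow> ('s, 'b) sact \<Rightarrow> ('s, 'a + 'b) sact" where
  "coprod A B = (Inl ` car A \<union> Inr ` car B,
     \<lambda>s x. case x of Inl a \<Rightarrow> Inl (act A s a) | Inr b \<Rightarrow> Inr (act B s b))"

definition act_power :: "('s, 'b) sact \<Rightarrow> 'i set \<Rightarrow> ('s, 'i \<Rightarrow> 'b) sact" where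
  "act_power B I = (I \<rightarrow>\<^sub>E car B, \<lambda>s f. \<lambda>i\<in>I. act B s (f i))"

text \<open>Free act F_X = coproduct of copies S_x of S, x in X, represented as X \<times> S.\<close>
definition free_act :: "('s, 'm) monoid_scheme \<Rightarrow> 'x set \<Rightarrow> ('s, 'x \<times> 's) sact" where
  "free_act S X = (X \<times> carrier S, \<lambda>s (x, t). (x, s \<otimes>\<^bsub>S\<^esub> t))"

definition hom_ker :: "('s, 'a) sact \<Rightarrow> ('a \<Rightarrow> 'b) \<Rightarrow> ('a \<times> 'a) set" where
  "hom_ker A \<mu> = {(u, v). u \<in> car A \<and> v \<in> car A \<and> \<mu> u = \<mu> v}"

definition T_prime :: "('s, 'm) monoid_scheme \<Rightarrow> 'x set \<Rightarrow> ('s, 'g) sact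
    \<Rightarrow> (('x \<times> 's) \<times> ('x \<times> 's)) set \<Rightarrow> (('x \<times> 's) \<Rightarrow> 'g) set" where
  "T_prime S X G T = {\<mu>. act_hom S (free_act S X) G \<mu> \<and> T \<subseteq> hom_ker (free_act S X) \<mu>}"

text \<open>T'' = intersection of the kernels; empty intersection is F_X \<times> F_X.\<close>
definition T_dprime :: "('s, 'm) monoid_scheme \<Rightarrow> 'x set \<Rightarrow> ('s, 'g) sact
    \<Rightarrow> (('x \<times> 's) \<times> ('x \<times> 's)) set \<Rightarrow> (('x \<times> 's) \<times> ('x \<times> 's)) set" where
  "T_dprime S X G T = (car (free_act S X) \<times> car (free_act S X)) \<inter>
       (\<Inter>\<mu>\<in>T_prime S X G T. hom_ker (free_act S X) \<mu>)"

text \<open>Geometric equivalence; finite sets of variables are taken as finite sets of naturals.\<close>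
definition geom_equiv :: "('s, 'm) monoid_scheme \<Rightarrow> ('s, 'a) sact \<Rightarrow> ('s, 'b) sact \<Rightarrow> bool" where
  "geom_equiv S G1 G2 \<longleftrightarrow>
     (\<forall>X :: nat set. finite X \<and> X \<noteq> {} \<longrightarrow>
        (\<forall>T. T \<subseteq> car (free_act S X) \<times> car (free_act S X) \<longrightarrow>
           T_dprime S X G1 T = T_dprime S X G2 T))"

end

theory Submission imports Defs begin
lemma hom_comp_i:
  assumes f: "act_hom S A (act_power B I) f" "i \<in> I"
  shows "act_hom S A B (\<lambda>a. f a i)"
  using f unfolding act_hom_def act_power_def car_def act_def
  by (auto simp: PiE_iff)
lemma hom_in: "act_hom S A B f \<Longrightarrow> a \<in> car A \<Longrightarrow> f a \<in> car B"
  unfolding act_hom_def by auto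
lemma power_car: "car (act_power B I) = I \<rightarrow>\<^sub>E car B"
  unfolding act_power_def car_def by simp

lemma subsing:
  assumes f: "act_hom S A (act_power B I) f" "inj_on f (car A)" and I: "I = {}"
  shows "\<forall>a\<in>car A. \<forall>a'\<in>car A. a = a'"
proof (intro ballI)
  fix a a' assume a: "a \<in> car A" "a' \<in> car A"
  have "f a \<in> I \<rightarrow>\<^sub>E car B" "f a' \<in> I \<rightarrow>\<^sub>E car B"
    using hom_in[OF f(1) a(1)] hom_in[OF f(1) a(2)] by (simp_all add: power_car)
  hence "f a = f a'" using I by simp
  thus "a = a'" using f(2) a inj_onD by metis
qed

lemma is_act_ne: "is_act S A \<Longrightarrow> car A \<noteq> {}"
  unfolding is_act_def by (elim conjE)
lemma is_act_cl: "is_act S A \<Longrightarrow> s \<in> carrier S \<Longrightarrow> a \<in> car A \<Longrightarrow> act A s a \<in> car A"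
  unfolding is_act_def by (elim conjE) blast

lemma sep_family:
  assumes A: "is_act S A" and B: "is_act S B"
    and f: "act_hom S A (act_power B I) f" "inj_on f (car A)"
    and g: "act_hom S B (act_power A J) g" "inj_on g (car B)"
  shows "\<exists>H. H \<noteq> {} \<and> (\<forall>h\<in>H. act_hom S A B h) \<and>
           (\<forall>a\<in>car A. \<forall>a'\<in>car A. (\<forall>h\<in>H. h a = h a') \<longrightarrow> a = a')"
proof (cases "I = {}")
  case False
  let ?H = "(\<lambda>i a. f a i) ` I"
  have "\<forall>h\<in>?H. act_hom S A B h"
    using hom_comp_i[OF f(1)] by blast
  moreover have "\<forall>a\<in>car A. \<forall>a'\<in>car A. (\<forall>h\<in>?H. h a = h a') \<longrightarrow> a = a'"
  proof (intro ballI impI)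
    fix a a' assume a: "a \<in> car A" "a' \<in> car A" and e: "\<forall>h\<in>?H. h a = h a'"
    have 1: "f a \<in> I \<rightarrow>\<^sub>E car B" "f a' \<in> I \<rightarrow>\<^sub>E car B"
      using hom_in[OF f(1) a(1)] hom_in[OF f(1) a(2)] by (simp_all add: power_car)
    have 2: "\<And>i. i \<in> I \<Longrightarrow> f a i = f a' i"
    proof -
      fix i assume "i \<in> I"
      hence "(\<lambda>a. f a i) \<in> ?H" by (rule imageI)
      from bspec[OF e this] show "f a i = f a' i" by simp
    qed
    have "f a = f a'" by (rule PiE_ext[OF 1 2])
    thus "a = a'" using f(2) a inj_onD by metis
  qed
  moreover have "?H \<noteq> {}" using False by simp
  ultimately show ?thesis by (intro exI[of _ ?H]) simp
next
  case True
  have Asub: "\<forall>a\<in>car A. \<forall>a'\<in>car A. a = a'" using subsing[OF f True] .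
  obtain a0 where a0: "a0 \<in> car A" using is_act_ne[OF A] by blast
  have Jsub: "J \<rightarrow>\<^sub>E car A \<subseteq> {\<lambda>j\<in>J. a0}"
  proof
    fix x assume x: "x \<in> J \<rightarrow>\<^sub>E car A"
    have r: "(\<lambda>j\<in>J. a0) \<in> J \<rightarrow>\<^sub>E car A" using a0 by simp
    have "x = (\<lambda>j\<in>J. a0)"
    proof (rule PiE_ext[OF x r])
      fix j assume j: "j \<in> J"
      have "x j \<in> car A" using PiE_mem[OF x j] .
      hence "x j = a0" using Asub a0 by blast
      thus "x j = (\<lambda>j\<in>J. a0) j" using j by simp
    qed
    thus "x \<in> {\<lambda>j\<in>J. a0}" by simp
  qed
  have Bsub: "\<forall>b\<in>car B. \<forall>b'\<in>car B. b = b'"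
  proof (intro ballI)
    fix b b' assume b: "b \<in> car B" "b' \<in> car B"
    have "g b \<in> J \<rightarrow>\<^sub>E car A" "g b' \<in> J \<rightarrow>\<^sub>E car A"
      using hom_in[OF g(1) b(1)] hom_in[OF g(1) b(2)] by (simp_all add: power_car)
    hence "g b = (\<lambda>j\<in>J. a0)" "g b' = (\<lambda>j\<in>J. a0)" using Jsub by auto
    hence "g b = g b'" by simp
    thus "b = b'" using g(2) b inj_onD by metis
  qed
  obtain b0 where b0: "b0 \<in> car B" using is_act_ne[OF B] by blast
  have "\<And>s. s \<in> carrier S \<Longrightarrow> act B s b0 \<in> car B"
    using is_act_cl[OF B _ b0] .
  hence "\<And>s. s \<in> carrier S \<Longrightarrow> b0 = act B s b0" using Bsub b0 by blast
  hence "act_hom S A B (\<lambda>_. b0)"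
    unfolding act_hom_def using b0 by blast
  thus ?thesis using Asub by (intro exI[of _ "{\<lambda>_. b0}"]) auto
qed
lemma coprod_hom:
  assumes "act_hom S A B h"
  shows "act_hom S (coprod C A) (coprod C B) (map_sum id h)"
  using assms unfolding act_hom_def coprod_def car_def act_def by auto

lemma comp_hom:
  assumes "act_hom S F G \<mu>" "act_hom S G K \<nu>"
  shows "act_hom S F K (\<nu> \<circ> \<mu>)"
  using assms unfolding act_hom_def by auto

lemma incl:
  assumes H: "H \<noteq> {}" "\<forall>h\<in>H. act_hom S A B h"
     "\<forall>a\<in>car A. \<forall>a'\<in>car A. (\<forall>h\<in>H. h a = h a') \<longrightarrow> a = a'"
  shows "T_dprime S X (coprod C B) T \<subseteq> T_dprime S X (coprod C A) T"
proof
  fix p assume p: "p \<in> T_dprime S X (coprod C B) T"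
  obtain u v where uv: "p = (u, v)" by (cases p)
  have uF: "u \<in> car (free_act S X)" "v \<in> car (free_act S X)"
    using p uv unfolding T_dprime_def by auto
  have "(u, v) \<in> hom_ker (free_act S X) \<mu>" if \<mu>: "\<mu> \<in> T_prime S X (coprod C A) T" for \<mu>
  proof -
    have mh: "act_hom S (free_act S X) (coprod C A) \<mu>" and mT: "T \<subseteq> hom_ker (free_act S X) \<mu>"
      using \<mu> unfolding T_prime_def by auto
    have eq: "map_sum id h (\<mu> u) = map_sum id h (\<mu> v)" if h: "h \<in> H" for h
    proof -
      have hh: "act_hom S (free_act S X) (coprod C B) (map_sum id h \<circ> \<mu>)"
        using comp_hom[OF mh coprod_hom[of S A B h C]] H(2) h by blast
      have "map_sum id h \<circ> \<mu> \<in> T_prime S X (coprod C B) T"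
        unfolding T_prime_def using hh mT
        unfolding hom_ker_def by auto
      thus ?thesis using p uv unfolding T_dprime_def hom_ker_def by auto
    qed
    have mu: "\<mu> u \<in> car (coprod C A)" "\<mu> v \<in> car (coprod C A)"
      using mh uF unfolding act_hom_def by auto
    obtain h0 where h0: "h0 \<in> H" using H(1) by blast
    have "\<mu> u = \<mu> v"
    proof (cases "\<mu> u")
      case (Inl c)
      then show ?thesis using eq[OF h0] by (cases "\<mu> v") auto
    next
      case (Inr a)
      then obtain a' where a': "\<mu> v = Inr a'" using eq[OF h0] by (cases "\<mu> v") auto
      have "a \<in> car A" "a' \<in> car A" using mu Inr a' unfolding coprod_def car_def by auto
      moreover have "\<forall>h\<in>H. h a = h a'" using eq Inr a' by auto
      ultimately show ?thesis using H(3) Inr a' by auto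
    qed
    thus ?thesis using uF unfolding hom_ker_def by auto
  qed
  thus "p \<in> T_dprime S X (coprod C A) T" using uF uv unfolding T_dprime_def by auto
qed

theorem proposition3p19:
  fixes S :: "('s, 'm) monoid_scheme"
    and A :: "('s, 'a) sact" and B :: "('s, 'b) sact" and C :: "('s, 'c) sact"
    and I :: "'i set" and J :: "'j set"
  assumes "group S"
    and "is_act S A" and "is_act S B"
    and "\<exists>f. act_hom S A (act_power B I) f \<and> inj_on f (car A)"
    and "\<exists>g. act_hom S B (act_power A J) g \<and> inj_on g (car B)"
  shows "\<forall>C :: ('s, 'c) sact. is_act S C \<longrightarrow> geom_equiv S (coprod C A) (coprod C B)"
proof (intro allI impI)
  fix C :: "('s, 'c) sact"
  obtain f where f: "act_hom S A (act_power B I) f" "inj_on f (car A)" using assms(4) by blast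
  obtain g where g: "act_hom S B (act_power A J) g" "inj_on g (car B)" using assms(5) by blast
  obtain H1 where H1: "H1 \<noteq> {}" "\<forall>h\<in>H1. act_hom S A B h"
     "\<forall>a\<in>car A. \<forall>a'\<in>car A. (\<forall>h\<in>H1. h a = h a') \<longrightarrow> a = a'"
    using sep_family[OF assms(2,3) f g] by blast
  obtain H2 where H2: "H2 \<noteq> {}" "\<forall>h\<in>H2. act_hom S B A h"
     "\<forall>a\<in>car B. \<forall>a'\<in>car B. (\<forall>h\<in>H2. h a = h a') \<longrightarrow> a = a'"
    using sep_family[OF assms(3,2) g f] by blast
  show "geom_equiv S (coprod C A) (coprod C B)"
    unfolding geom_equiv_def
    using incl[OF H1, of X C T for X T] incl[OF H2, of X C T for X T]
    by (metis subset_antisym)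
qed

end
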